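(* Let $\Delta=\delta_x\times\delta_y$ with $x_k=y_k=k/10$, $k=0,\dots,10$, and define $\langle A\rangle,\langle B\rangle:\Delta\to\mathbb{R}$ by $\langle A\rangle(j/10,k/10)=[A]_{j+1,k+1}$, $\langle B\rangle(j/10,k/10)=[B]_{j+1,k+1}$ ($j,k=0,\dots,10$), where $$[A]=\tfrac{1}{50}\begin{bmatrix} 0&0&0&0&0&0&0&0&0&0&0\\ 0&0&1&2&3&4&5&5&5&5&5\\ 0&1&2&3&3&4&5&10&10&10&10\\ 0&2&2&5&7&7&8&13&15&15&15\\ 0&3&3&6&7&7&8&13&18&20&20\\ 0&4&4&6&9&11&11&16&21&25&25\\ 0&5&5&7&9&11&11&16&21&26&30\\ 0&5&10&12&14&16&16&21&26&31&35\\ 0&5&10&15&19&21&21&26&31&36&40\\ 0&5&10&15&20&25&26&31&36&41&45\\ 0&5&10&15&20&25&30&35&40&45&50 \end{bmatrix},\quad [B]=\tfrac{1}{50}\begin{bmatrix} 0&0&0&0&0&0&0&0&0&0&0\\ 0&1&2&3&4&5&5&5&5&5&5\\ 0&2&2&3&4&5&6&10&10&10&10\\ 0&3&3&6&7&8&9&14&15&15&15\\ 0&4&4&6&8&8&9&14&18&20&20\\ 0&5&5&7&9&11&12&17&22&25&25\\ 0&5&6&8&10&12&12&17&22&26&30\\ 0&5&10&13&15&17&17&22&27&31&35\\ 0&5&10&15&19&21&22&27&32&36&40\\ 0&5&10&15&20&25&26&31&36&41&45\\ 0&5&10&15&20&25&30&35&40&45&50 \end{bmatrix}.$$ Then $\langle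 A\rangle$ is a discrete quasi-copula, $\langle B\rangle=\langle A\rangle_M$, $(\langle A\rangle,\langle B\rangle)$ is a discrete imprecise copula, and there is no discrete copula $C$ on $\Delta$ with $\langle A\rangle\le C\le\langle B\rangle$. Consequently $(\langle A\rangle^{\mathrm{BL}},\langle B\rangle^{\mathrm{BL}})$ is an imprecise copula on $[0,1]^2$ for which no copula $C$ satisfies $\langle A\rangle^{\mathrm{BL}}\le C\le\langle B\rangle^{\mathrm{BL}}$.
   Context: All points and rectangle corners are in the mesh $\Delta$ unless stated otherwise. For $Q:\Delta\to\mathbb{R}$, $V_Q([s_1,s_2]\times[t_1,t_2])=Q(s_1,t_1)+Q(s_2,t_2)-Q(s_2,t_1)-Q(s_1,t_2)$. Discrete copula: grounded ($Q(x,0)=Q(0,y)=0$), neutral element 1 ($Q(x,1)=x$, $Q(1,y)=y$), $V_Q\ge0$ on all rectangles with corners in $\Delta$; discrete quasi-copula: grounded, neutral element 1, $V_Q\ge0$ on rectangles with corners in $\Delta$ having a side on the boundary of $[0,1]^2$. Defects: for $\mathbf{x}\in\Delta$, $D^Q_\nearrow(\mathbf{x})$, $D^Q_\swarrow(\mathbf{x})$ are the minima of $V_Q(R)$ over (possibly degenerate) rectangles with corners in $\Delta$ having $\mathbf{x}$ as southwest, respectively northeast, corner; $D^Q_M=\min(D^Q_\nearrow,D^Q_\swarrow)$ and $Q_M=Q-D^Q_M$. Discrete imprecise copula: pair $(A,B)$ on $\Delta$, both grounded with neutral element 1, such that for every rectangle with corners in $\Delta$ and SW, SE, NE, NW corners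 $\mathbf{a},\mathbf{b},\mathbf{c},\mathbf{d}$: $A(\mathbf{a})+B(\mathbf{c})-A(\mathbf{b})-A(\mathbf{d})\ge0$, $B(\mathbf{a})+A(\mathbf{c})-A(\mathbf{b})-A(\mathbf{d})\ge0$, $B(\mathbf{a})+B(\mathbf{c})-B(\mathbf{b})-A(\mathbf{d})\ge0$, $B(\mathbf{a})+B(\mathbf{c})-A(\mathbf{b})-B(\mathbf{d})\ge0$; the imprecise copula on $[0,1]^2$ is defined identically with points in $[0,1]^2$. Copula on $[0,1]^2$: grounded, neutral element 1, $V_C\ge0$ on all rectangles. $Q^{\mathrm{BL}}$ is the function on $[0,1]^2$ equal on each cell $[\frac{i-1}{10},\frac{i}{10}]\times[\frac{j-1}{10},\frac{j}{10}]$ to the bilinear interpolation (affine in each variable separately) of the corner values of $Q$. *)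

theory Defs
  imports Complex_Main
begin

definition mesh :: "real set" where
  "mesh = {real k / 10 | k. k \<le> 10}"

text \<open>Functions on Delta are represented as functions real => real => real;
only their values at points of mesh \<times> mesh matter.\<close>

definition Vol :: "(real \<Rightarrow> real \<Rightarrow> real) \<Rightarrow> real \<Rightarrow> real \<Rightarrow> real \<Rightarrow> real \<Rightarrow> real" where
  "Vol Q s1 s2 t1 t2 = Q s1 t1 + Q s2 t2 - Q s2 t1 - Q s1 t2"

definition disc_grounded :: "(real \<Rightarrow> real \<Rightarrow> real) \<Rightarrow> bool" where
  "disc_grounded Q \<longleftrightarrow> (\<forall>x\<in>mesh. Q x 0 = 0 \<and> Q 0 x = 0)"

definition disc_neutral :: "(real \<Rightarrow> real \<Rightarrow> real) \<Rightarrow> bool" where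
  "disc_neutral Q \<longleftrightarrow> (\<forall>x\<in>mesh. Q x 1 = x \<and> Q 1 x = x)"

definition disc_copula :: "(real \<Rightarrow> real \<Rightarrow> real) \<Rightarrow> bool" where
  "disc_copula Q \<longleftrightarrow> disc_grounded Q \<and> disc_neutral Q \<and>
     (\<forall>s1\<in>mesh. \<forall>s2\<in>mesh. \<forall>t1\<in>mesh. \<forall>t2\<in>mesh.
        s1 \<le> s2 \<longrightarrow> t1 \<le> t2 \<longrightarrow> Vol Q s1 s2 t1 t2 \<ge> 0)"

definition disc_quasi_copula :: "(real \<Rightarrow> real \<Rightarrow> real) \<Rightarrow> bool" where
  "disc_quasi_copula Q \<longleftrightarrow> disc_grounded Q \<and> disc_neutral Q \<and>
     (\<forall>s1\<in>mesh. \<forall>s2\<in>mesh. \<forall>t1\<in>mesh. \<forall>t2\<in>mesh.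
        s1 \<le> s2 \<longrightarrow> t1 \<le> t2 \<longrightarrow> (s1 = 0 \<or> s2 = 1 \<or> t1 = 0 \<or> t2 = 1) \<longrightarrow>
        Vol Q s1 s2 t1 t2 \<ge> 0)"

text \<open>Defects: minima of V_Q over (possibly degenerate) mesh rectangles having (a,b)
  as southwest, resp. northeast, corner.\<close>

definition defect_NE :: "(real \<Rightarrow> real \<Rightarrow> real) \<Rightarrow> real \<Rightarrow> real \<Rightarrow> real" where
  "defect_NE Q a b = Min {Vol Q a s2 b t2 | s2 t2. s2 \<in> mesh \<and> t2 \<in> mesh \<and> a \<le> s2 \<and> b \<le> t2}"

definition defect_SW :: "(real \<Rightarrow> real \<Rightarrow> real) \<Rightarrow> real \<Rightarrow> real \<Rightarrow> real" where
  "defect_SW Q a b = Min {Vol Q s1 a t1 b | s1 t1. s1 \<in> mesh \<and> t1 \<in> mesh \<and> s1 \<le> a \<and> t1 \<le> b}"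

definition defect_M :: "(real \<Rightarrow> real \<Rightarrow> real) \<Rightarrow> real \<Rightarrow> real \<Rightarrow> real" where
  "defect_M Q a b = min (defect_NE Q a b) (defect_SW Q a b)"

definition Q_M :: "(real \<Rightarrow> real \<Rightarrow> real) \<Rightarrow> real \<Rightarrow> real \<Rightarrow> real" where
  "Q_M Q a b = Q a b - defect_M Q a b"

text \<open>Imprecise copula conditions; SW, SE, NE, NW corners of [s1,s2] x [t1,t2] are
  (s1,t1), (s2,t1), (s2,t2), (s1,t2).\<close>

definition imprecise_ineqs :: "(real \<Rightarrow> real \<Rightarrow> real) \<Rightarrow> (real \<Rightarrow> real \<Rightarrow> real) \<Rightarrow> real \<Rightarrow> real \<Rightarrow> real \<Rightarrow> real \<Rightarrow> bool" where
  "imprecise_ineqs A B s1 s2 t1 t2 \<longleftrightarrow>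
     A s1 t1 + B s2 t2 - A s2 t1 - A s1 t2 \<ge> 0 \<and>
     B s1 t1 + A s2 t2 - A s2 t1 - A s1 t2 \<ge> 0 \<and>
     B s1 t1 + B s2 t2 - B s2 t1 - A s1 t2 \<ge> 0 \<and>
     B s1 t1 + B s2 t2 - A s2 t1 - B s1 t2 \<ge> 0"

definition disc_imprecise_copula :: "(real \<Rightarrow> real \<Rightarrow> real) \<Rightarrow> (real \<Rightarrow> real \<Rightarrow> real) \<Rightarrow> bool" where
  "disc_imprecise_copula A B \<longleftrightarrow>
     disc_grounded A \<and> disc_neutral A \<and> disc_grounded B \<and> disc_neutral B \<and>
     (\<forall>s1\<in>mesh. \<forall>s2\<in>mesh. \<forall>t1\<in>mesh. \<forall>t2\<in>mesh.
        s1 \<le> s2 \<longrightarrow> t1 \<le> t2 \<longrightarrow> imprecise_ineqs A B s1 s2 t1 t2)"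

definition grounded :: "(real \<Rightarrow> real \<Rightarrow> real) \<Rightarrow> bool" where
  "grounded Q \<longleftrightarrow> (\<forall>x\<in>{0..1}. Q x 0 = 0 \<and> Q 0 x = 0)"

definition neutral :: "(real \<Rightarrow> real \<Rightarrow> real) \<Rightarrow> bool" where
  "neutral Q \<longleftrightarrow> (\<forall>x\<in>{0..1}. Q x 1 = x \<and> Q 1 x = x)"

definition copula :: "(real \<Rightarrow> real \<Rightarrow> real) \<Rightarrow> bool" where
  "copula C \<longleftrightarrow> grounded C \<and> neutral C \<and>
     (\<forall>s1\<in>{0..1}. \<forall>s2\<in>{0..1}. \<forall>t1\<in>{0..1}. \<forall>t2\<in>{0..1}.
        s1 \<le> s2 \<longrightarrow> t1 \<le> t2 \<longrightarrow> Vol C s1 s2 t1 t2 \<ge> 0)"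

definition imprecise_copula :: "(real \<Rightarrow> real \<Rightarrow> real) \<Rightarrow> (real \<Rightarrow> real \<Rightarrow> real) \<Rightarrow> bool" where
  "imprecise_copula A B \<longleftrightarrow>
     grounded A \<and> neutral A \<and> grounded B \<and> neutral B \<and>
     (\<forall>s1\<in>{0..1}. \<forall>s2\<in>{0..1}. \<forall>t1\<in>{0..1}. \<forall>t2\<in>{0..1}.
        s1 \<le> s2 \<longrightarrow> t1 \<le> t2 \<longrightarrow> imprecise_ineqs A B s1 s2 t1 t2)"

text \<open>For x in [0,1], the cell index i (0..9) with x in [i/10,(i+1)/10]
  (at shared cell boundaries any choice gives the same value).\<close>

definition cell :: "real \<Rightarrow> nat" where
  "cell x = min (nat \<lfloor>10 * x\<rfloor>) 9"

definition BL :: "(real \<Rightarrow> real \<Rightarrow> real) \<Rightarrow> real \<Rightarrow> real \<Rightarrow> real" where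
  "BL Q x y =
     (let i = cell x; j = cell y;
          u = 10 * x - real i; v = 10 * y - real j;
          x0 = real i / 10; x1 = real (i + 1) / 10;
          y0 = real j / 10; y1 = real (j + 1) / 10
      in (1 - u) * (1 - v) * Q x0 y0 + u * (1 - v) * Q x1 y0
         + (1 - u) * v * Q x0 y1 + u * v * Q x1 y1)"

definition matA :: "int list list" where
  "matA =
   [[0,0,0,0,0,0,0,0,0,0,0],
    [0,0,1,2,3,4,5,5,5,5,5],
    [0,1,2,3,3,4,5,10,10,10,10],
    [0,2,2,5,7,7,8,13,15,15,15],
    [0,3,3,6,7,7,8,13,18,20,20],
    [0,4,4,6,9,11,11,16,21,25,25],
    [0,5,5,7,9,11,11,16,21,26,30],
    [0,5,10,12,14,16,16,21,26,31,35],
    [0,5,10,15,19,21,21,26,31,36,40],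
    [0,5,10,15,20,25,26,31,36,41,45],
    [0,5,10,15,20,25,30,35,40,45,50]]"

definition matB :: "int list list" where
  "matB =
   [[0,0,0,0,0,0,0,0,0,0,0],
    [0,1,2,3,4,5,5,5,5,5,5],
    [0,2,2,3,4,5,6,10,10,10,10],
    [0,3,3,6,7,8,9,14,15,15,15],
    [0,4,4,6,8,8,9,14,18,20,20],
    [0,5,5,7,9,11,12,17,22,25,25],
    [0,5,6,8,10,12,12,17,22,26,30],
    [0,5,10,13,15,17,17,22,27,31,35],
    [0,5,10,15,19,21,22,27,32,36,40],
    [0,5,10,15,20,25,26,31,36,41,45],
    [0,5,10,15,20,25,30,35,40,45,50]]"

text \<open><M>(j/10, k/10) = [M]_{j+1,k+1} / 50 (0-based list indices j, k).\<close>

definition mesh_fun :: "int list list \<Rightarrow> real \<Rightarrow> real \<Rightarrow> real" where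
  "mesh_fun M x y = real_of_int (M ! nat (round (10 * x)) ! nat (round (10 * y))) / 50"

definition A_mesh :: "real \<Rightarrow> real \<Rightarrow> real" where "A_mesh = mesh_fun matA"
definition B_mesh :: "real \<Rightarrow> real \<Rightarrow> real" where "B_mesh = mesh_fun matB"

end

theory Submission
  imports Defs
begin


lemma ball_mesh: "(\<forall>x\<in>mesh. P x) = (\<forall>k\<le>10. P (real k/10))"
  unfolding mesh_def by blast

lemma mesh_fun_at: "mesh_fun M (real k/10) (real l/10) = real_of_int (M!k!l)/50"
  unfolding mesh_fun_def by simp

lemma mesh_fun_at0: "mesh_fun M (real k/10) 0 = real_of_int (M!k!0)/50"
  "mesh_fun M 0 (real k/10) = real_of_int (M!0!k)/50"
  "mesh_fun M (real k/10) 1 = real_of_int (M!k!10)/50"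
  "mesh_fun M 1 (real k/10) = real_of_int (M!10!k)/50"
  unfolding mesh_fun_def by simp_all

lemma ord_mesh: "(real a/10 \<le> real b/(10::real)) = (a \<le> b)"
  "(real a/10 = (0::real)) = (a = 0)" "(real a/10 = (1::real)) = (a = 10)"
  by auto

definition vint :: "int list list \<Rightarrow> nat \<Rightarrow> nat \<Rightarrow> nat \<Rightarrow> nat \<Rightarrow> int" where
 "vint M a b c d = M!a!c + M!b!d - M!b!c - M!a!d"

lemma vol_at: "Vol (mesh_fun M) (real a/10) (real b/10) (real c/10) (real d/10) = real_of_int (vint M a b c d)/50"
  unfolding Vol_def vint_def mesh_fun_at by (simp add: diff_divide_distrib add_divide_distrib)

definition chk_bd :: "int list list \<Rightarrow> bool" where
 "chk_bd M = (\<forall>k\<in>set [0..<11]. M!k!0 = 0 \<and> M!0!k = 0 \<and> M!k!10 = 5 * int k \<and> M!10!k = 5 * int k)"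

lemma bdA: "chk_bd matA" by code_simp
lemma bdB: "chk_bd matB" by code_simp

lemma bd_gn: assumes "chk_bd M" shows "disc_grounded (mesh_fun M)" "disc_neutral (mesh_fun M)"
proof -
  have h: "M!k!0 = 0 \<and> M!0!k = 0 \<and> M!k!10 = 5 * int k \<and> M!10!k = 5 * int k" if "k \<le> 10" for k
    using assms that unfolding chk_bd_def by auto
  show "disc_grounded (mesh_fun M)" unfolding disc_grounded_def ball_mesh
    using h by (simp add: mesh_fun_at0)
  show "disc_neutral (mesh_fun M)" unfolding disc_neutral_def ball_mesh
    using h by (simp add: mesh_fun_at0)
qed

lemma meshE: assumes "x \<in> mesh" obtains m where "m \<le> 10" "x = real m/10"
  using assms unfolding mesh_def by blast

lemma mesh_I: "m \<le> 10 \<Longrightarrow> real m/10 \<in> mesh" unfolding mesh_def by blast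

lemma setNE: "{Vol (mesh_fun M) (real k/10) s2 (real l/10) t2 | s2 t2. s2 \<in> mesh \<and> t2 \<in> mesh \<and> real k/10 \<le> s2 \<and> real l/10 \<le> t2}
   = (\<lambda>z. real_of_int z/50) ` set [vint M k m l n. m \<leftarrow> [k..<11], n \<leftarrow> [l..<11]]"
proof (rule set_eqI, rule iffI)
  fix v assume "v \<in> {Vol (mesh_fun M) (real k/10) s2 (real l/10) t2 | s2 t2. s2 \<in> mesh \<and> t2 \<in> mesh \<and> real k/10 \<le> s2 \<and> real l/10 \<le> t2}"
  then obtain s2 t2 where st: "s2 \<in> mesh" "t2 \<in> mesh" "real k/10 \<le> s2" "real l/10 \<le> t2" "v = Vol (mesh_fun M) (real k/10) s2 (real l/10) t2"
    by blast
  from st(1) obtain m where m: "m \<le> 10" "s2 = real m/10" by (rule meshE)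
  from st(2) obtain n where n: "n \<le> 10" "t2 = real n/10" by (rule meshE)
  from st m n have "m \<le> 10" "n \<le> 10" "k \<le> m" "l \<le> n" "v = Vol (mesh_fun M) (real k/10) (real m/10) (real l/10) (real n/10)"
    by (auto simp: ord_mesh)
  then have "v = real_of_int (vint M k m l n)/50" "vint M k m l n \<in> set [vint M k m l n. m \<leftarrow> [k..<11], n \<leftarrow> [l..<11]]"
    by (simp add: vol_at, auto intro!: bexI[where x=m] imageI)
  then show "v \<in> (\<lambda>z. real_of_int z/50) ` set [vint M k m l n. m \<leftarrow> [k..<11], n \<leftarrow> [l..<11]]"
    by (metis image_eqI)
next
  fix v assume "v \<in> (\<lambda>z. real_of_int z/50) ` set [vint M k m l n. m \<leftarrow> [k..<11], n \<leftarrow> [l..<11]]"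
  then obtain z where z: "z \<in> set [vint M k m l n. m \<leftarrow> [k..<11], n \<leftarrow> [l..<11]]" "v = real_of_int z/50" by blast
  from z(1) obtain m n where mn: "k \<le> m" "m < 11" "l \<le> n" "n < 11" "z = vint M k m l n" by auto
  from mn z(2) have "m \<le> 10" "n \<le> 10" "k \<le> m" "l \<le> n" "v = Vol (mesh_fun M) (real k/10) (real m/10) (real l/10) (real n/10)"
    by (auto simp: vol_at)
  then show "v \<in> {Vol (mesh_fun M) (real k/10) s2 (real l/10) t2 | s2 t2. s2 \<in> mesh \<and> t2 \<in> mesh \<and> real k/10 \<le> s2 \<and> real l/10 \<le> t2}"
    apply (simp only: mem_Collect_eq)
    apply (rule exI[of _ "real m/10"], rule exI[of _ "real n/10"])
    by (simp add: mesh_I ord_mesh)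
qed

lemma setSW: "{Vol (mesh_fun M) s1 (real k/10) t1 (real l/10) | s1 t1. s1 \<in> mesh \<and> t1 \<in> mesh \<and> s1 \<le> real k/10 \<and> t1 \<le> real l/10}
   = (\<lambda>z. real_of_int z/50) ` set [vint M m k n l. m \<leftarrow> [0..<Suc k], n \<leftarrow> [0..<Suc l]]"
  if "k \<le> 10" "l \<le> 10"
proof (rule set_eqI, rule iffI)
  fix v assume "v \<in> {Vol (mesh_fun M) s1 (real k/10) t1 (real l/10) | s1 t1. s1 \<in> mesh \<and> t1 \<in> mesh \<and> s1 \<le> real k/10 \<and> t1 \<le> real l/10}"
  then obtain s2 t2 where st: "s2 \<in> mesh" "t2 \<in> mesh" "s2 \<le> real k/10" "t2 \<le> real l/10" "v = Vol (mesh_fun M) s2 (real k/10) t2 (real l/10)"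
    by blast
  from st(1) obtain m where m: "m \<le> 10" "s2 = real m/10" by (rule meshE)
  from st(2) obtain n where n: "n \<le> 10" "t2 = real n/10" by (rule meshE)
  from st m n have "m \<le> k" "n \<le> l" "v = Vol (mesh_fun M) (real m/10) (real k/10) (real n/10) (real l/10)"
    by (auto simp: ord_mesh)
  then have "v = real_of_int (vint M m k n l)/50" "vint M m k n l \<in> set [vint M m k n l. m \<leftarrow> [0..<Suc k], n \<leftarrow> [0..<Suc l]]"
    by (simp add: vol_at, auto intro!: bexI[where x=m] imageI simp del: upt_Suc)
  then show "v \<in> (\<lambda>z. real_of_int z/50) ` set [vint M m k n l. m \<leftarrow> [0..<Suc k], n \<leftarrow> [0..<Suc l]]"
    by (metis image_eqI)
next
  fix v assume "v \<in> (\<lambda>z. real_of_int z/50) ` set [vint M m k n l. m \<leftarrow> [0..<Suc k], n \<leftarrow> [0..<Suc l]]"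
  then obtain z where z: "z \<in> set [vint M m k n l. m \<leftarrow> [0..<Suc k], n \<leftarrow> [0..<Suc l]]" "v = real_of_int z/50" by blast
  from z(1) obtain m n where mn: "m < Suc k" "n < Suc l" "z = vint M m k n l" by (auto simp del: upt_Suc)
  from mn z(2) have "m \<le> k" "n \<le> l" "v = Vol (mesh_fun M) (real m/10) (real k/10) (real n/10) (real l/10)"
    by (auto simp: vol_at)
  then show "v \<in> {Vol (mesh_fun M) s1 (real k/10) t1 (real l/10) | s1 t1. s1 \<in> mesh \<and> t1 \<in> mesh \<and> s1 \<le> real k/10 \<and> t1 \<le> real l/10}"
    apply (simp only: mem_Collect_eq)
    apply (rule exI[of _ "real m/10"], rule exI[of _ "real n/10"])
    using that by (simp add: mesh_I ord_mesh)
qed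

definition ne_int :: "int list list \<Rightarrow> nat \<Rightarrow> nat \<Rightarrow> int" where
  "ne_int M k l = Min (set [vint M k m l n. m \<leftarrow> [k..<11], n \<leftarrow> [l..<11]])"
definition sw_int :: "int list list \<Rightarrow> nat \<Rightarrow> nat \<Rightarrow> int" where
  "sw_int M k l = Min (set [vint M m k n l. m \<leftarrow> [0..<Suc k], n \<leftarrow> [0..<Suc l]])"

lemma mono_div50: "mono (\<lambda>z::int. real_of_int z/50)"
  by (rule monoI) simp

lemma defNE_at: assumes "k \<le> 10" "l \<le> 10"
  shows "defect_NE (mesh_fun M) (real k/10) (real l/10) = real_of_int (ne_int M k l)/50"
proof -
  have ne: "set [vint M k m l n. m \<leftarrow> [k..<11], n \<leftarrow> [l..<11]] \<noteq> {}"
    using assms by simp presburger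
  show ?thesis unfolding defect_NE_def setNE ne_int_def
    by (rule mono_Min_commute[OF mono_div50 _ ne, symmetric]) simp
qed

lemma defSW_at: assumes "k \<le> 10" "l \<le> 10"
  shows "defect_SW (mesh_fun M) (real k/10) (real l/10) = real_of_int (sw_int M k l)/50"
proof -
  have ne: "set [vint M m k n l. m \<leftarrow> [0..<Suc k], n \<leftarrow> [0..<Suc l]] \<noteq> {}"
    by (simp del: upt_Suc) (metis zero_less_Suc)
  show ?thesis unfolding defect_SW_def setSW[OF assms] sw_int_def
    by (rule mono_Min_commute[OF mono_div50 _ ne, symmetric]) simp
qed

definition chk_qm :: bool where
  "chk_qm = (\<forall>k\<in>set [0..<11]. \<forall>l\<in>set [0..<11]. matB!k!l = matA!k!l - min (ne_int matA k l) (sw_int matA k l))"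

lemma chk_qm by code_simp


lemma no_copula_core:
  fixes C :: "real \<Rightarrow> real \<Rightarrow> real"
  assumes V: "\<And>a b c d. a \<le> b \<Longrightarrow> c \<le> d \<Longrightarrow> b \<le> 10 \<Longrightarrow> d \<le> 10 \<Longrightarrow> 0 \<le> Vol C (real a/10) (real b/10) (real c/10) (real d/10)"
  and L: "\<And>a b. a \<le> 10 \<Longrightarrow> b \<le> 10 \<Longrightarrow> A_mesh (real a/10) (real b/10) \<le> C (real a/10) (real b/10)"
  and H: "\<And>a b. a \<le> 10 \<Longrightarrow> b \<le> 10 \<Longrightarrow> C (real a/10) (real b/10) \<le> B_mesh (real a/10) (real b/10)"
  shows False
proof -
  note f = H[of 1 1] L[of 1 6] L[of 2 2] H[of 2 4] H[of 3 2] L[of 3 4] L[of 4 3] H[of 4 5] H[of 5 3] L[of 5 5] L[of 6 1] H[of 6 6] V[of 1 2 1 2] V[of 1 2 2 3] V[of 1 2 3 4] V[of 1 2 4 5] V[of 1 2 5 6] V[of 2 3 1 2] V[of 2 3 4 5] V[of 2 3 5 6] V[of 3 4 1 2] V[of 3 4 2 3] V[of 3 4 3 4] V[of 3 4 4 5] V[of 3 4 5 6] V[of 4 5 1 2] V[of 4 5 2 3] V[of 4 5 5 6] V[of 5 6 1 2] V[of 5 6 2 3] V[of 5 6 3 4] V[of 5 6 4 5] V[of 5 6 5 6]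
  note g = f[unfolded Vol_def A_mesh_def B_mesh_def mesh_fun_at, simplified, simplified matA_def matB_def, simplified]
  show False using g by linarith
qed


definition chk_quasi :: bool where
 "chk_quasi = (\<forall>a\<in>set [0..<11]. \<forall>b\<in>set [0..<11]. \<forall>c\<in>set [0..<11]. \<forall>d\<in>set [0..<11].
    a \<le> b \<longrightarrow> c \<le> d \<longrightarrow> (a=0 \<or> b=10 \<or> c=0 \<or> d=10) \<longrightarrow> vint matA a b c d \<ge> 0)"
definition chk_imp :: bool where
 "chk_imp = (\<forall>a\<in>set [0..<11]. \<forall>b\<in>set [0..<11]. \<forall>c\<in>set [0..<11]. \<forall>d\<in>set [0..<11].
    a \<le> b \<longrightarrow> c \<le> d \<longrightarrow> 
     matA!a!c + matB!b!d - matA!b!c - matA!a!d \<ge> 0 \<and>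
     matB!a!c + matA!b!d - matA!b!c - matA!a!d \<ge> 0 \<and>
     matB!a!c + matB!b!d - matB!b!c - matA!a!d \<ge> 0 \<and>
     matB!a!c + matB!b!d - matA!b!c - matB!a!d \<ge> 0)"

lemma chk_quasi_ok: chk_quasi by code_simp
lemma chk_imp_ok: chk_imp by code_simp
lemma chk_qm_ok: chk_qm by code_simp

lemma cast4: "0 \<le> p+q-r-s \<Longrightarrow> 0 \<le> real_of_int p/50 + real_of_int q/50 - real_of_int r/50 - real_of_int s/50"
proof -
  assume "0 \<le> p+q-r-s"
  then have "0 \<le> real_of_int (p+q-r-s)/50" by simp
  also have "real_of_int (p+q-r-s)/50 = real_of_int p/50 + real_of_int q/50 - real_of_int r/50 - real_of_int s/50"
    by (simp add: diff_divide_distrib add_divide_distrib)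
  finally show ?thesis .
qed

lemma quasiA: "disc_quasi_copula A_mesh"
proof -
  have q: "0 \<le> vint matA a b c d" if "a \<le>10" "b\<le>10" "c\<le>10" "d\<le>10" "a \<le> b" "c \<le> d" "(a=0\<or>b=10\<or>c=0\<or>d=10)" for a b c d
  proof -
    have h: "\<forall>a\<in>set [0..<11]. \<forall>b\<in>set [0..<11]. \<forall>c\<in>set [0..<11]. \<forall>d\<in>set [0..<11].
    a \<le> b \<longrightarrow> c \<le> d \<longrightarrow> (a=0 \<or> b=10 \<or> c=0 \<or> d=10) \<longrightarrow> vint matA a b c d \<ge> 0"
      using chk_quasi_ok unfolding chk_quasi_def .
    have m: "a \<in> set [0..<11]" "b \<in> set [0..<11]" "c \<in> set [0..<11]" "d \<in> set [0..<11]" using that by auto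
    show ?thesis using h m that(5-7) by blast
  qed
  show ?thesis unfolding disc_quasi_copula_def ball_mesh ord_mesh A_mesh_def vol_at
    using bd_gn[OF bdA] q by auto
qed

lemma impAB: "disc_imprecise_copula A_mesh B_mesh"
proof -
  have q: "imprecise_ineqs A_mesh B_mesh (real a/10) (real b/10) (real c/10) (real d/10)" if "a \<le>10" "b\<le>10" "c\<le>10" "d\<le>10" "a \<le> b" "c \<le> d" for a b c d
  proof -
    have h: "\<forall>a\<in>set [0..<11]. \<forall>b\<in>set [0..<11]. \<forall>c\<in>set [0..<11]. \<forall>d\<in>set [0..<11].
    a \<le> b \<longrightarrow> c \<le> d \<longrightarrow> 
     matA!a!c + matB!b!d - matA!b!c - matA!a!d \<ge> 0 \<and>
     matB!a!c + matA!b!d - matA!b!c - matA!a!d \<ge> 0 \<and>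
     matB!a!c + matB!b!d - matB!b!c - matA!a!d \<ge> 0 \<and>
     matB!a!c + matB!b!d - matA!b!c - matB!a!d \<ge> 0"
      using chk_imp_ok unfolding chk_imp_def .
    have m: "a \<in> set [0..<11]" "b \<in> set [0..<11]" "c \<in> set [0..<11]" "d \<in> set [0..<11]" using that by auto
    have i: "matA!a!c + matB!b!d - matA!b!c - matA!a!d \<ge> 0 \<and>
     matB!a!c + matA!b!d - matA!b!c - matA!a!d \<ge> 0 \<and>
     matB!a!c + matB!b!d - matB!b!c - matA!a!d \<ge> 0 \<and>
     matB!a!c + matB!b!d - matA!b!c - matB!a!d \<ge> 0" using h m that(5,6) by blast
    show ?thesis unfolding imprecise_ineqs_def A_mesh_def B_mesh_def mesh_fun_at
      using i by (intro conjI cast4) auto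
  qed
  show ?thesis unfolding disc_imprecise_copula_def ball_mesh ord_mesh
    using bd_gn[OF bdA] bd_gn[OF bdB] q unfolding A_mesh_def B_mesh_def by auto
qed

lemma qmAB: "\<forall>x\<in>mesh. \<forall>y\<in>mesh. B_mesh x y = Q_M A_mesh x y"
  unfolding ball_mesh
proof (intro allI impI)
  fix k l :: nat assume kl: "k \<le> 10" "l \<le> 10"
  have e: "matB!k!l = matA!k!l - min (ne_int matA k l) (sw_int matA k l)"
    using chk_qm_ok kl unfolding chk_qm_def by auto
  have e2: "real_of_int (matB!k!l) = real_of_int (matA!k!l) - min (real_of_int (ne_int matA k l)) (real_of_int (sw_int matA k l))"
    unfolding e by simp
  show "B_mesh (real k / 10) (real l / 10) = Q_M A_mesh (real k / 10) (real l / 10)"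
    unfolding Q_M_def defect_M_def A_mesh_def B_mesh_def defNE_at[OF kl] defSW_at[OF kl] mesh_fun_at
    using e2 by (simp add: min_def)
qed



definition interp :: "(real \<Rightarrow> real) \<Rightarrow> real \<Rightarrow> real" where
  "interp h x = (1 - (10*x - real (cell x))) * h (real (cell x)/10) + (10*x - real (cell x)) * h (real (cell x + 1)/10)"

lemma BL_x: "BL Q x y = interp (\<lambda>z. interp (\<lambda>w. Q z w) y) x"
  unfolding BL_def interp_def Let_def by (simp add: algebra_simps)

lemma BL_y: "BL Q x y = interp (\<lambda>w. interp (\<lambda>z. Q z w) x) y"
  unfolding BL_def interp_def Let_def by (simp add: algebra_simps)

lemma cell_le: "cell x \<le> 9" unfolding cell_def by simp

lemma cell_mesh: "m \<le> 10 \<Longrightarrow> cell (real m/10) = min m 9"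
  unfolding cell_def by simp

lemma interp_mesh: assumes "m \<le> 10" shows "interp h (real m/10) = h (real m/10)"
proof (cases "m \<le> 9")
  case True
  then show ?thesis unfolding interp_def cell_mesh[OF assms] by simp
next
  case False
  then have "m = 10" using assms by simp
  then show ?thesis unfolding interp_def by (simp add: cell_def)
qed

lemma interp_0: "interp h 0 = h 0" using interp_mesh[of 0 h] by simp
lemma interp_1: "interp h 1 = h 1" using interp_mesh[of 10 h] by simp

lemma cell_loc: assumes "0 \<le> x" "x \<le> 1"
  shows "real (cell x)/10 \<le> x \<and> x \<le> real (cell x + 1)/10"
proof (cases "nat \<lfloor>10*x\<rfloor> \<le> 9")
  case True
  then have c: "cell x = nat \<lfloor>10*x\<rfloor>" unfolding cell_def by simp
  have f0: "0 \<le> \<lfloor>10*x\<rfloor>" using assms by simp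
  have "real_of_int \<lfloor>10*x\<rfloor> \<le> 10*x" "10*x < real_of_int \<lfloor>10*x\<rfloor> + 1" by linarith+
  moreover have "real (cell x) = real_of_int \<lfloor>10*x\<rfloor>" using f0 c by simp
  moreover have "real (cell x + 1) = real (cell x) + 1" by simp
  ultimately have "real (cell x) \<le> 10*x" "10*x \<le> real (cell x) + 1" by linarith+
  then show ?thesis by (simp add: field_simps)
next
  case False
  then have c: "cell x = 9" unfolding cell_def by simp
  have "\<lfloor>10*x\<rfloor> \<ge> 10" using False by linarith
  then have "10*x \<ge> 10" by linarith
  then show ?thesis unfolding c using assms by simp
qed

lemma cell_in: assumes "k < 10" "real k/10 \<le> x" "x \<le> real (k+1)/10"
  shows "cell x = k \<or> (cell x = k+1 \<and> x = real (k+1)/10)"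
proof -
  have a: "real k \<le> 10*x" "10*x \<le> real k + 1" using assms by auto
  have f1: "\<lfloor>10*x\<rfloor> \<ge> int k" using a(1) by linarith
  have f2: "\<lfloor>10*x\<rfloor> \<le> int k + 1" using a(2) by linarith
  show ?thesis
  proof (cases "\<lfloor>10*x\<rfloor> = int k")
    case True
    then show ?thesis unfolding cell_def using assms by simp
  next
    case False
    then have "\<lfloor>10*x\<rfloor> = int k + 1" using f1 f2 by simp
    moreover then have "10*x = real k + 1" using a by linarith
    ultimately show ?thesis unfolding cell_def using assms by (auto simp: nat_add_distrib)
  qed
qed

definition aff :: "(real \<Rightarrow> real) \<Rightarrow> bool" where
  "aff g \<longleftrightarrow> (\<forall>k<10. \<forall>x. real k/10 \<le> x \<and> x \<le> real (k+1)/10 \<longrightarrow>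
      g x = (1 - (10*x - real k)) * g (real k/10) + (10*x - real k) * g (real (k+1)/10))"

lemma aff_interp: "aff (interp h)"
  unfolding aff_def
proof (intro allI impI)
  fix k x assume k: "k < (10::nat)" and x: "real k/10 \<le> x \<and> x \<le> real (k+1)/10"
  have m1: "interp h (real k/10) = h (real k/10)" using k by (intro interp_mesh) simp
  have m2: "interp h (real (k+1)/10) = h (real (k+1)/10)" using k by (intro interp_mesh) simp
  from cell_in[OF k] x consider "cell x = k" | "cell x = k+1" "x = real (k+1)/10" by blast
  then show "interp h x = (1 - (10*x - real k)) * interp h (real k/10) + (10*x - real k) * interp h (real (k+1)/10)"
  proof cases
    case 1 then show ?thesis unfolding m1 m2 by (simp add: interp_def)
  next
    case 2
    have e1: "10*x - real k = 1" using 2(2) by simp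
    have u: "10*x - real (k+1) = 0" using 2(2) by simp
    have "interp h x = h (real (k+1)/10)" unfolding interp_def 2(1) u by simp
    then show ?thesis unfolding m1 m2 e1 by simp
  qed
qed

lemma aff_comb: assumes "aff g" "aff h" shows "aff (\<lambda>x. c + g x - h x)"
  unfolding aff_def
proof (intro allI impI)
  fix k x assume k: "k < (10::nat)" and x: "real k/10 \<le> x \<and> x \<le> real (k+1)/10"
  have e1: "g x = (1 - (10*x - real k)) * g (real k/10) + (10*x - real k) * g (real (k+1)/10)"
    using assms(1) k x unfolding aff_def by blast
  have e2: "h x = (1 - (10*x - real k)) * h (real k/10) + (10*x - real k) * h (real (k+1)/10)"
    using assms(2) k x unfolding aff_def by blast
  show "c + g x - h x = (1 - (10*x - real k)) * (c + g (real k/10) - h (real k/10)) + (10*x - real k) * (c + g (real (k+1)/10) - h (real (k+1)/10))"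
    unfolding e1 e2 by (simp add: algebra_simps)
qed

lemma aff_cong: "aff g \<Longrightarrow> (\<And>x. f x = g x) \<Longrightarrow> aff f"
  by (metis ext)

lemma lin_nonneg:
  fixes P Q K lo hi x :: real
  defines "f \<equiv> \<lambda>y. (1 - (10*y - K)) * P + (10*y - K) * Q"
  assumes "f lo \<ge> 0" "f hi \<ge> 0" "lo \<le> x" "x \<le> hi"
  shows "f x \<ge> 0"
proof -
  have d1: "f x - f lo = 10*(Q-P)*(x-lo)" unfolding f_def by (simp add: algebra_simps)
  have d2: "f hi - f x = 10*(Q-P)*(hi-x)" unfolding f_def by (simp add: algebra_simps)
  show ?thesis
  proof (cases "Q \<ge> P")
    case True
    then have "10*(Q-P)*(x-lo) \<ge> 0" using assms by simp
    then show ?thesis using d1 assms by linarith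
  next
    case False
    then have "10*(P-Q)*(hi-x) \<ge> 0" using assms by simp
    then show ?thesis using d2 assms by (simp add: algebra_simps)
  qed
qed

lemma oneD:
  assumes g: "aff g" and "0 \<le> a" "a \<le> x" "x \<le> b" "b \<le> 1" "g a \<ge> 0" "g b \<ge> 0"
    and mesh: "\<And>k. k \<le> 10 \<Longrightarrow> a \<le> real k/10 \<Longrightarrow> real k/10 \<le> b \<Longrightarrow> g (real k/10) \<ge> 0"
  shows "g x \<ge> 0"
proof -
  define k where "k = cell x"
  have k10: "k < 10" using cell_le[of x] unfolding k_def by simp
  have loc: "real k/10 \<le> x" "x \<le> real (k+1)/10" using cell_loc[of x] assms unfolding k_def by auto
  define lo where "lo = max a (real k/10)"
  define hi where "hi = min b (real (k+1)/10)"
  have glo: "g lo \<ge> 0"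
  proof (cases "a \<ge> real k/10")
    case True then show ?thesis unfolding lo_def using assms by simp
  next
    case False then have "lo = real k/10" unfolding lo_def by simp
    moreover have "g (real k/10) \<ge> 0" by (rule mesh) (use False assms loc k10 in auto)
    ultimately show ?thesis by metis
  qed
  have ghi: "g hi \<ge> 0"
  proof (cases "b \<le> real (k+1)/10")
    case True then show ?thesis unfolding hi_def using assms by simp
  next
    case False then have "hi = real (k+1)/10" unfolding hi_def by simp
    moreover have "g (real (k+1)/10) \<ge> 0" by (rule mesh) (use False assms loc k10 in auto)
    ultimately show ?thesis by metis
  qed
  have lohi: "lo \<le> x" "x \<le> hi" "real k/10 \<le> lo" "lo \<le> real (k+1)/10" "real k/10 \<le> hi" "hi \<le> real (k+1)/10"
    unfolding lo_def hi_def using assms(2-5) loc by (auto simp: max_def min_def)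
  have A: "\<And>y. real k/10 \<le> y \<Longrightarrow> y \<le> real (k+1)/10 \<Longrightarrow>
      g y = (1 - (10*y - real k)) * g (real k/10) + (10*y - real k) * g (real (k+1)/10)"
    using g k10 unfolding aff_def by blast
  show ?thesis
    using lin_nonneg[where K="real k" and P="g (real k/10)" and Q="g (real (k+1)/10)" and lo=lo and hi=hi and x=x]
      A[of lo] A[of hi] A[of x] glo ghi lohi by auto
qed


lemma ord_mesh3: "(real a/10 \<le> real b/(10::real)) = (a \<le> b)"
  by auto

definition aff2 :: "(real \<Rightarrow> real \<Rightarrow> real) \<Rightarrow> bool" where
  "aff2 Q \<longleftrightarrow> (\<forall>y. aff (\<lambda>x. Q x y)) \<and> (\<forall>x. aff (\<lambda>y. Q x y))"

lemma aff2_BL: "aff2 (BL Q)"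
  unfolding aff2_def
proof (intro conjI allI)
  fix y show "aff (\<lambda>x. BL Q x y)"
    by (rule aff_cong[OF aff_interp[of "\<lambda>z. interp (\<lambda>w. Q z w) y"]]) (simp add: BL_x)
next
  fix x show "aff (\<lambda>y. BL Q x y)"
    by (rule aff_cong[OF aff_interp[of "\<lambda>w. interp (\<lambda>z. Q z w) x"]]) (simp add: BL_y)
qed

lemma BL_mesh: "a \<le> 10 \<Longrightarrow> b \<le> 10 \<Longrightarrow> BL Q (real a/10) (real b/10) = Q (real a/10) (real b/10)"
  unfolding BL_x by (simp add: interp_mesh)

lemma oneD01: assumes "aff g" "0 \<le> x" "x \<le> 1" "\<And>k. k \<le> 10 \<Longrightarrow> g (real k/10) \<ge> 0"
  shows "g x \<ge> 0"
proof (rule oneD[OF assms(1), of 0 x 1])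
  show "g 0 \<ge> 0" using assms(4)[of 0] by simp
  show "g 1 \<ge> 0" using assms(4)[of 10] by simp
qed (use assms in auto)

lemma cont_ineq:
  fixes F G H K :: "real \<Rightarrow> real \<Rightarrow> real"
  assumes aF: "aff2 F" and aG: "aff2 G" and aH: "aff2 H" and aK: "aff2 K"
  and mesh: "\<And>a b c d. a \<le> b \<Longrightarrow> c \<le> d \<Longrightarrow> b \<le> 10 \<Longrightarrow> d \<le> 10 \<Longrightarrow>
     0 \<le> F (real a/10) (real c/10) + G (real b/10) (real d/10) - H (real b/10) (real c/10) - K (real a/10) (real d/10)"
  and degS: "\<And>s t1 t2. 0 \<le> s \<Longrightarrow> s \<le> 1 \<Longrightarrow> 0 \<le> t1 \<Longrightarrow> t1 \<le> t2 \<Longrightarrow> t2 \<le> 1 \<Longrightarrow>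
     0 \<le> F s t1 + G s t2 - H s t1 - K s t2"
  and degT: "\<And>s1 s2 t. 0 \<le> s1 \<Longrightarrow> s1 \<le> s2 \<Longrightarrow> s2 \<le> 1 \<Longrightarrow> 0 \<le> t \<Longrightarrow> t \<le> 1 \<Longrightarrow>
     0 \<le> F s1 t + G s2 t - H s2 t - K s1 t"
  and r: "0 \<le> s1" "s1 \<le> s2" "s2 \<le> 1" "0 \<le> t1" "t1 \<le> t2" "t2 \<le> 1"
  shows "0 \<le> F s1 t1 + G s2 t2 - H s2 t1 - K s1 t2"
proof -
  have ax: "aff (\<lambda>x. Q x y)" if "aff2 Q" for Q y using that unfolding aff2_def by blast
  have ay: "aff (\<lambda>y. Q x y)" if "aff2 Q" for Q x using that unfolding aff2_def by blast
  have S3: "0 \<le> F (real a/10) t + G (real b/10) (real d/10) - H (real b/10) t - K (real a/10) (real d/10)"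
    if "a \<le> b" "b \<le> 10" "d \<le> 10" "0 \<le> t" "t \<le> real d/10" for a b d t
  proof -
    let ?c = "G (real b/10) (real d/10) - K (real a/10) (real d/10)"
    have g: "aff (\<lambda>t. ?c + F (real a/10) t - H (real b/10) t)"
      by (rule aff_comb[OF ay[OF aF] ay[OF aH]])
    have "0 \<le> ?c + F (real a/10) t - H (real b/10) t"
    proof (rule oneD[OF g, of 0 t "real d/10"])
      show "0 \<le> ?c + F (real a/10) 0 - H (real b/10) 0"
        using mesh[of a b 0 d] that by simp
      show "0 \<le> ?c + F (real a/10) (real d/10) - H (real b/10) (real d/10)"
        using mesh[of a b d d] that by simp
      fix k assume "k \<le> 10" "0 \<le> real k/10" "real k/10 \<le> real d/10"
      then show "0 \<le> ?c + F (real a/10) (real k/10) - H (real b/10) (real k/10)"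
        using mesh[of a b k d] that by (simp only: ord_mesh3) simp
    qed (use that in auto)
    then show ?thesis by simp
  qed
  have S2: "0 \<le> F (real a/10) t1 + G (real b/10) t2 - H (real b/10) t1 - K (real a/10) t2"
    if "a \<le> b" "b \<le> 10" "0 \<le> t1" "t1 \<le> t2" "t2 \<le> 1" for a b t1 t2
  proof -
    let ?c = "F (real a/10) t1 - H (real b/10) t1"
    have g: "aff (\<lambda>t. ?c + G (real b/10) t - K (real a/10) t)"
      by (rule aff_comb[OF ay[OF aG] ay[OF aK]])
    have "0 \<le> ?c + G (real b/10) t2 - K (real a/10) t2"
    proof (rule oneD[OF g, of t1 t2 1])
      show "0 \<le> ?c + G (real b/10) t1 - K (real a/10) t1"
        using degT[of "real a/10" "real b/10" t1] that by (simp add: ord_mesh3)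
      show "0 \<le> ?c + G (real b/10) 1 - K (real a/10) 1"
        using S3[of a b 10 t1] that by simp
      fix k assume "k \<le> 10" "t1 \<le> real k/10" "real k/10 \<le> 1"
      then show "0 \<le> ?c + G (real b/10) (real k/10) - K (real a/10) (real k/10)"
        using S3[of a b k t1] that by simp
    qed (use that in auto)
    then show ?thesis by simp
  qed
  have S1: "0 \<le> F s t1 + G (real b/10) t2 - H (real b/10) t1 - K s t2"
    if "b \<le> 10" "0 \<le> s" "s \<le> real b/10" for b s
  proof -
    let ?c = "G (real b/10) t2 - H (real b/10) t1"
    have g: "aff (\<lambda>s. ?c + F s t1 - K s t2)"
      by (rule aff_comb[OF ax[OF aF] ax[OF aK]])
    have "0 \<le> ?c + F s t1 - K s t2"
    proof (rule oneD[OF g, of 0 s "real b/10"])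
      show "0 \<le> ?c + F 0 t1 - K 0 t2"
        using S2[of 0 b t1 t2] that r by simp
      show "0 \<le> ?c + F (real b/10) t1 - K (real b/10) t2"
        using S2[of b b t1 t2] that r by simp
      fix k assume "k \<le> 10" "0 \<le> real k/10" "real k/10 \<le> real b/10"
      then show "0 \<le> ?c + F (real k/10) t1 - K (real k/10) t2"
        using S2[of k b t1 t2] that r by (simp only: ord_mesh3) simp
    qed (use that in auto)
    then show ?thesis by simp
  qed
  let ?c = "F s1 t1 - K s1 t2"
  have g: "aff (\<lambda>s. ?c + G s t2 - H s t1)"
    by (rule aff_comb[OF ax[OF aG] ax[OF aH]])
  have "0 \<le> ?c + G s2 t2 - H s2 t1"
  proof (rule oneD[OF g, of s1 s2 1])
    show "0 \<le> ?c + G s1 t2 - H s1 t1"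
      using degS[of s1 t1 t2] r by simp
    show "0 \<le> ?c + G 1 t2 - H 1 t1"
      using S1[of 10 s1] r by simp
    fix k assume "k \<le> 10" "s1 \<le> real k/10" "real k/10 \<le> 1"
    then show "0 \<le> ?c + G (real k/10) t2 - H (real k/10) t1"
      using S1[of k s1] r by simp
  qed (use r in auto)
  then show ?thesis by simp
qed


lemma mesh_I3: "m \<le> 10 \<Longrightarrow> real m/10 \<in> mesh" unfolding mesh_def by blast

lemma BL_gn: assumes "disc_grounded Q" "disc_neutral Q" shows "grounded (BL Q)" "neutral (BL Q)"
proof -
  have Qg: "Q (real m/10) 0 = 0" "Q 0 (real m/10) = 0" "Q (real m/10) 1 = real m/10" "Q 1 (real m/10) = real m/10"
    if "m \<le> 10" for m
    using assms mesh_I3[OF that] unfolding disc_grounded_def disc_neutral_def by auto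
  have c: "cell x \<le> 9" for x by (rule cell_le)
  show "grounded (BL Q)" unfolding grounded_def
  proof (intro ballI conjI)
    fix x :: real
    show "BL Q x 0 = 0" unfolding BL_y interp_0 unfolding interp_def
      using Qg(1)[of "cell x"] Qg(1)[of "cell x + 1"] c[of x] by simp
    show "BL Q 0 x = 0" unfolding BL_x interp_0 unfolding interp_def
      using Qg(2)[of "cell x"] Qg(2)[of "cell x + 1"] c[of x] by simp
  qed
  show "neutral (BL Q)" unfolding neutral_def
  proof (intro ballI conjI)
    fix x :: real
    have q: "Q (real (cell x)/10) 1 = real (cell x)/10" "Q (real (cell x + 1)/10) 1 = real (cell x + 1)/10"
      "Q 1 (real (cell x)/10) = real (cell x)/10" "Q 1 (real (cell x + 1)/10) = real (cell x + 1)/10"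
      by (rule Qg, use c[of x] in simp)+
    have "BL Q x 1 = (1 - (10*x - real (cell x))) * (real (cell x)/10) + (10*x - real (cell x)) * (real (cell x + 1)/10)"
      unfolding BL_y interp_1 unfolding interp_def q by simp
    also have "\<dots> = x" by (simp add: field_simps)
    finally show "BL Q x 1 = x" .
    have "BL Q 1 x = (1 - (10*x - real (cell x))) * (real (cell x)/10) + (10*x - real (cell x)) * (real (cell x + 1)/10)"
      unfolding BL_x interp_1 unfolding interp_def q by simp
    also have "\<dots> = x" by (simp add: field_simps)
    finally show "BL Q 1 x = x" .
  qed
qed

lemma disc_to_cont: assumes D: "disc_imprecise_copula A B" shows "imprecise_copula (BL A) (BL B)"
proof -
  have gn: "disc_grounded A" "disc_neutral A" "disc_grounded B" "disc_neutral B"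
    using D unfolding disc_imprecise_copula_def by auto
  have ineq: "imprecise_ineqs A B (real a/10) (real b/10) (real c/10) (real d/10)"
    if "a \<le> b" "c \<le> d" "b \<le> 10" "d \<le> 10" for a b c d
    using D mesh_I3 that unfolding disc_imprecise_copula_def by (simp add: ord_mesh3)
  have AB: "A (real a/10) (real b/10) \<le> B (real a/10) (real b/10)" if "a \<le> 10" "b \<le> 10" for a b
    using ineq[of a a b b] that unfolding imprecise_ineqs_def by simp
  have BLAB: "BL A x y \<le> BL B x y" if "0 \<le> x" "x \<le> 1" "0 \<le> y" "y \<le> 1" for x y
  proof -
    have g: "aff (\<lambda>x. 0 + BL B x y - BL A x y)"
      using aff2_BL[of B] aff2_BL[of A] unfolding aff2_def by (intro aff_comb) auto
    have "0 \<le> 0 + BL B x y - BL A x y"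
    proof (rule oneD01[OF g that(1,2)])
      fix k :: nat assume k: "k \<le> 10"
      have g2: "aff (\<lambda>y. 0 + BL B (real k/10) y - BL A (real k/10) y)"
        using aff2_BL[of B] aff2_BL[of A] unfolding aff2_def by (intro aff_comb) auto
      show "0 \<le> 0 + BL B (real k/10) y - BL A (real k/10) y"
      proof (rule oneD01[OF g2 that(3,4)])
        fix l :: nat assume "l \<le> 10"
        then show "0 \<le> 0 + BL B (real k/10) (real l/10) - BL A (real k/10) (real l/10)"
          using AB[of k l] k by (simp add: BL_mesh)
      qed
    qed
    then show ?thesis by simp
  qed
  have M: "BL Q (real a/10) (real b/10) = Q (real a/10) (real b/10)" if "a \<le> 10" "b \<le> 10" for Q a b
    using BL_mesh that by blast
  show ?thesis unfolding imprecise_copula_def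
  proof (intro conjI BL_gn gn ballI impI)
    fix s1 s2 t1 t2 :: real
    assume r: "s1 \<in> {0..1}" "s2 \<in> {0..1}" "t1 \<in> {0..1}" "t2 \<in> {0..1}" "s1 \<le> s2" "t1 \<le> t2"
    have r': "0 \<le> s1" "s1 \<le> s2" "s2 \<le> 1" "0 \<le> t1" "t1 \<le> t2" "t2 \<le> 1" using r by auto
    note aff = aff2_BL[of A] aff2_BL[of B]
    show "imprecise_ineqs (BL A) (BL B) s1 s2 t1 t2"
      unfolding imprecise_ineqs_def
    proof (intro conjI)
      show "0 \<le> BL A s1 t1 + BL B s2 t2 - BL A s2 t1 - BL A s1 t2"
      proof (rule cont_ineq[OF aff(1) aff(2) aff(1) aff(1) _ _ _ r'])
        fix a b c d :: nat assume h: "a \<le> b" "c \<le> d" "b \<le> 10" "d \<le> 10"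
        then show "0 \<le> BL A (real a/10) (real c/10) + BL B (real b/10) (real d/10) - BL A (real b/10) (real c/10) - BL A (real a/10) (real d/10)"
          using ineq[OF h] by (simp add: M imprecise_ineqs_def)
      qed (use BLAB in force)+
      show "0 \<le> BL B s1 t1 + BL A s2 t2 - BL A s2 t1 - BL A s1 t2"
      proof (rule cont_ineq[OF aff(2) aff(1) aff(1) aff(1) _ _ _ r'])
        fix a b c d :: nat assume h: "a \<le> b" "c \<le> d" "b \<le> 10" "d \<le> 10"
        then show "0 \<le> BL B (real a/10) (real c/10) + BL A (real b/10) (real d/10) - BL A (real b/10) (real c/10) - BL A (real a/10) (real d/10)"
          using ineq[OF h] by (simp add: M imprecise_ineqs_def)
      qed (use BLAB in force)+
      show "0 \<le> BL B s1 t1 + BL B s2 t2 - BL B s2 t1 - BL A s1 t2"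
      proof (rule cont_ineq[OF aff(2) aff(2) aff(2) aff(1) _ _ _ r'])
        fix a b c d :: nat assume h: "a \<le> b" "c \<le> d" "b \<le> 10" "d \<le> 10"
        then show "0 \<le> BL B (real a/10) (real c/10) + BL B (real b/10) (real d/10) - BL B (real b/10) (real c/10) - BL A (real a/10) (real d/10)"
          using ineq[OF h] by (simp add: M imprecise_ineqs_def)
      qed (use BLAB in force)+
      show "0 \<le> BL B s1 t1 + BL B s2 t2 - BL A s2 t1 - BL B s1 t2"
      proof (rule cont_ineq[OF aff(2) aff(2) aff(1) aff(2) _ _ _ r'])
        fix a b c d :: nat assume h: "a \<le> b" "c \<le> d" "b \<le> 10" "d \<le> 10"
        then show "0 \<le> BL B (real a/10) (real c/10) + BL B (real b/10) (real d/10) - BL A (real b/10) (real c/10) - BL B (real a/10) (real d/10)"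
          using ineq[OF h] by (simp add: M imprecise_ineqs_def)
      qed (use BLAB in force)+
    qed
  qed
qed


theorem mainTheorem17:
  shows "disc_quasi_copula A_mesh
    \<and> (\<forall>x\<in>mesh. \<forall>y\<in>mesh. B_mesh x y = Q_M A_mesh x y)
    \<and> disc_imprecise_copula A_mesh B_mesh
    \<and> \<not> (\<exists>C. disc_copula C \<and> (\<forall>x\<in>mesh. \<forall>y\<in>mesh. A_mesh x y \<le> C x y \<and> C x y \<le> B_mesh x y))
    \<and> imprecise_copula (BL A_mesh) (BL B_mesh)
    \<and> \<not> (\<exists>C. copula C \<and> (\<forall>x\<in>{0..1}. \<forall>y\<in>{0..1}. BL A_mesh x y \<le> C x y \<and> C x y \<le> BL B_mesh x y))"
proof (intro conjI)
  show "disc_quasi_copula A_mesh" by (rule quasiA)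
  show "\<forall>x\<in>mesh. \<forall>y\<in>mesh. B_mesh x y = Q_M A_mesh x y" by (rule qmAB)
  show "disc_imprecise_copula A_mesh B_mesh" by (rule impAB)
  show "imprecise_copula (BL A_mesh) (BL B_mesh)" by (rule disc_to_cont[OF impAB])
  show "\<not> (\<exists>C. disc_copula C \<and> (\<forall>x\<in>mesh. \<forall>y\<in>mesh. A_mesh x y \<le> C x y \<and> C x y \<le> B_mesh x y))"
  proof
    assume "\<exists>C. disc_copula C \<and> (\<forall>x\<in>mesh. \<forall>y\<in>mesh. A_mesh x y \<le> C x y \<and> C x y \<le> B_mesh x y)"
    then obtain C where C: "disc_copula C" "\<forall>x\<in>mesh. \<forall>y\<in>mesh. A_mesh x y \<le> C x y \<and> C x y \<le> B_mesh x y" by blast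
    show False
    proof (rule no_copula_core[of C])
      fix a b c d :: nat assume h: "a \<le> b" "c \<le> d" "b \<le> 10" "d \<le> 10"
      then show "0 \<le> Vol C (real a/10) (real b/10) (real c/10) (real d/10)"
        using C(1) mesh_I[of a] mesh_I[of b] mesh_I[of c] mesh_I[of d] unfolding disc_copula_def
        by (simp add: ord_mesh)
    next
      fix a b :: nat assume "a \<le> 10" "b \<le> 10"
      then show "A_mesh (real a/10) (real b/10) \<le> C (real a/10) (real b/10)"
        using C(2) mesh_I by blast
    next
      fix a b :: nat assume "a \<le> 10" "b \<le> 10"
      then show "C (real a/10) (real b/10) \<le> B_mesh (real a/10) (real b/10)"
        using C(2) mesh_I by blast
    qed
  qed
  show "\<not> (\<exists>C. copula C \<and> (\<forall>x\<in>{0..1}. \<forall>y\<in>{0..1}. BL A_mesh x y \<le> C x y \<and> C x y \<le> BL B_mesh x y))"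
  proof
    assume "\<exists>C. copula C \<and> (\<forall>x\<in>{0..1}. \<forall>y\<in>{0..1}. BL A_mesh x y \<le> C x y \<and> C x y \<le> BL B_mesh x y)"
    then obtain C where C: "copula C" "\<forall>x\<in>{0..1}. \<forall>y\<in>{0..1}. BL A_mesh x y \<le> C x y \<and> C x y \<le> BL B_mesh x y" by blast
    have I: "real m/10 \<in> {0..(1::real)}" if "m \<le> 10" for m using that by auto
    show False
    proof (rule no_copula_core[of C])
      fix a b c d :: nat assume h: "a \<le> b" "c \<le> d" "b \<le> 10" "d \<le> 10"
      then show "0 \<le> Vol C (real a/10) (real b/10) (real c/10) (real d/10)"
        using C(1) I[of a] I[of b] I[of c] I[of d] unfolding copula_def
        by (simp add: ord_mesh)
    next
      fix a b :: nat assume h: "a \<le> 10" "b \<le> 10"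
      then have "BL A_mesh (real a/10) (real b/10) \<le> C (real a/10) (real b/10)"
        using C(2) I by blast
      then show "A_mesh (real a/10) (real b/10) \<le> C (real a/10) (real b/10)"
        using BL_mesh[OF h] by simp
    next
      fix a b :: nat assume h: "a \<le> 10" "b \<le> 10"
      then have "C (real a/10) (real b/10) \<le> BL B_mesh (real a/10) (real b/10)"
        using C(2) I by blast
      then show "C (real a/10) (real b/10) \<le> B_mesh (real a/10) (real b/10)"
        using BL_mesh[OF h] by simp
    qed
  qed
qed

end
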